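(* Let $\mathbf{P_0},\mathbf{P_1}$ be $n\times n$ transition probability matrices of irreducible and aperiodic Markov chains on $n$ states, let $\mathbf{P_s}=(1-s)\mathbf{P_0}+s\mathbf{P_1}$ for $s\in[0,1]$, and let $\pi_s$ be the stationary distribution of $\mathbf{P_s}$. Then $s\mapsto\pi_s$ is continuous at $s=0$ with respect to the total variation norm. In particular, for $0<\epsilon<1/\sqrt{n}$, if $$\delta=\frac{\epsilon(1-\sqrt{n}\,\epsilon)}{4n^{3/2}\,t_{mix}(\epsilon/2)},$$ then $\|\pi_s-\pi_0\|_{TV}\le\epsilon/2$ for all $s\in[0,1]$ with $s\le\delta$.
   Context: Distributions are row vectors; $\|\mu-\nu\|_{TV}=\frac12\|\mu-\nu\|_1$. For an irreducible aperiodic transition matrix $\mathbf{P}$ with stationary distribution $\pi$, $t_{mix}(\mathbf{P},\epsilon)=\inf\{T\in\mathbb{N}: \|\nu\mathbf{P}^T-\pi\|_{TV}\le\epsilon \text{ for all distributions }\nu\}$, and $t_{mix}(\epsilon)=\sup_{s\in[0,1]}t_{mix}(\mathbf{P_s},\epsilon)$. *)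

theory Defs
  imports "HOL-Analysis.Analysis"
begin

text \<open>Finite-state Markov chains on the finite state type 'n (n = CARD('n) states).
  Transition matrices are real^'n^'n, distributions are row vectors real^'n,
  acting on the left via v*.\<close>

primrec matpow :: "real^'n^'n \<Rightarrow> nat \<Rightarrow> real^'n^'n" where
  "matpow P 0 = mat 1"
| "matpow P (Suc k) = matpow P k ** P"

definition stochastic :: "real^'n^'n \<Rightarrow> bool" where
  "stochastic P \<longleftrightarrow> (\<forall>i j. P$i$j \<ge> 0) \<and> (\<forall>i. (\<Sum>j\<in>UNIV. P$i$j) = 1)"

definition irreducible :: "real^'n^'n \<Rightarrow> bool" where
  "irreducible P \<longleftrightarrow> (\<forall>i j. \<exists>k. matpow P k $i$j > 0)"

definition period :: "real^'n^'n \<Rightarrow> 'n \<Rightarrow> nat" where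
  "period P i = Gcd {t. t \<ge> 1 \<and> matpow P t $i$i > 0}"

definition aperiodic :: "real^'n^'n \<Rightarrow> bool" where
  "aperiodic P \<longleftrightarrow> (\<forall>i. period P i = 1)"

definition distribution :: "real^'n \<Rightarrow> bool" where
  "distribution v \<longleftrightarrow> (\<forall>i. v$i \<ge> 0) \<and> (\<Sum>i\<in>UNIV. v$i) = 1"

definition stationary :: "real^'n^'n \<Rightarrow> real^'n \<Rightarrow> bool" where
  "stationary P \<pi> \<longleftrightarrow> distribution \<pi> \<and> \<pi> v* P = \<pi>"

text \<open>The (unique, for irreducible P) stationary distribution.\<close>
definition stat_dist :: "real^'n^'n \<Rightarrow> real^'n" where
  "stat_dist P = (THE \<pi>. stationary P \<pi>)"

definition tv_dist :: "real^'n \<Rightarrow> real^'n \<Rightarrow> real" where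
  "tv_dist \<mu> \<nu> = (\<Sum>i\<in>UNIV. \<bar>\<mu>$i - \<nu>$i\<bar>) / 2"

definition tmix :: "real^'n^'n \<Rightarrow> real \<Rightarrow> nat" where
  "tmix P \<epsilon> = Inf {T. \<forall>\<nu>. distribution \<nu> \<longrightarrow> tv_dist (\<nu> v* matpow P T) (stat_dist P) \<le> \<epsilon>}"

definition interp :: "real^'n^'n \<Rightarrow> real^'n^'n \<Rightarrow> real \<Rightarrow> real^'n^'n" where
  "interp P0 P1 s = (1 - s) *\<^sub>R P0 + s *\<^sub>R P1"

definition tmix_path :: "real^'n^'n \<Rightarrow> real^'n^'n \<Rightarrow> real \<Rightarrow> nat" where
  "tmix_path P0 P1 \<epsilon> = Sup ((\<lambda>s. tmix (interp P0 P1 s) \<epsilon>) ` {0..1})"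

end

theory Submission
  imports Defs
begin

definition n1 :: "real^'n \<Rightarrow> real" where "n1 v = (\<Sum>i\<in>UNIV. \<bar>v$i\<bar>)"

lemma tv_n1: "tv_dist a b = n1 (a - b) / 2" by (simp add: tv_dist_def n1_def)

lemma vm_nth: "(v v* A) $ j = (\<Sum>i\<in>UNIV. v$i * A$i$j)" by (simp add: vector_matrix_mult_def)

lemma mm_nth: "(A ** B)$i$j = (\<Sum>k\<in>UNIV. A$i$k * B$k$j)" by (simp add: matrix_matrix_mult_def)

lemma matpow_add: "matpow P (a+b) = matpow P a ** matpow P b"
  by (induct b) (simp_all add: matrix_mul_assoc)

lemma matpow_mult: "matpow P (m*K) = matpow (matpow P K) m"
proof (induct m)
  case (Suc m)
  have "Suc m * K = m*K + K" by simp
  then show ?case using Suc by (simp only: matpow_add matpow.simps)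
qed simp

lemma n1_nonneg: "n1 v \<ge> 0" by (simp add: n1_def sum_nonneg)
lemma n1_add: "n1 (a + b) \<le> n1 a + n1 b"
  unfolding n1_def sum.distrib[symmetric] by (rule sum_mono) (simp add: abs_triangle_ineq)
lemma n1_diff: "n1 (a - b) \<le> n1 a + n1 b"
  unfolding n1_def sum.distrib[symmetric] by (rule sum_mono) (simp add: abs_triangle_ineq4)
lemma n1_scale: "n1 (r *s a) = \<bar>r\<bar> * n1 a"
  by (simp add: n1_def abs_mult sum_distrib_left)
lemma n1_scaleR: "n1 (r *\<^sub>R a) = \<bar>r\<bar> * n1 a"
  by (simp add: n1_def abs_mult sum_distrib_left)
lemma n1_sum: "n1 (\<Sum>k\<in>A. f k) \<le> (\<Sum>k\<in>A. n1 (f k))"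
proof (induct A rule: infinite_finite_induct)
  case (insert x F)
  then show ?case using n1_add[of "f x" "sum f F"] by simp
qed (auto simp: n1_def)
lemma n1_dist: "distribution v \<Longrightarrow> n1 v = 1"
  by (simp add: n1_def distribution_def)

lemma stoch_nonneg: "stochastic P \<Longrightarrow> P$i$j \<ge> 0" by (simp add: stochastic_def)
lemma stoch_rows: "stochastic P \<Longrightarrow> (\<Sum>j\<in>UNIV. P$i$j) = 1" by (simp add: stochastic_def)

lemma stoch_mult: assumes "stochastic A" "stochastic B" shows "stochastic (A ** B)"
proof -
  have "(\<Sum>j\<in>UNIV. (A**B)$i$j) = 1" for i
  proof -
    have "(\<Sum>j\<in>UNIV. (A**B)$i$j) = (\<Sum>k\<in>UNIV. A$i$k * (\<Sum>j\<in>UNIV. B$k$j))"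
      by (simp add: mm_nth sum_distrib_left) (rule sum.swap)
    also have "\<dots> = 1" using assms by (simp add: stoch_rows)
    finally show ?thesis .
  qed
  moreover have "(A**B)$i$j \<ge> 0" for i j
    using assms by (simp add: mm_nth sum_nonneg stoch_nonneg)
  ultimately show ?thesis by (simp add: stochastic_def)
qed

lemma stoch_mat1: "stochastic (mat 1)"
  by (simp add: stochastic_def mat_def)

lemma stoch_matpow: "stochastic P \<Longrightarrow> stochastic (matpow P k)"
  by (induct k) (simp_all add: stoch_mat1 stoch_mult)

lemma sum_vm: assumes "stochastic P" shows "(\<Sum>j\<in>UNIV. (v v* P)$j) = (\<Sum>i\<in>UNIV. v$i)"
proof -
  have "(\<Sum>j\<in>UNIV. (v v* P)$j) = (\<Sum>i\<in>UNIV. v$i * (\<Sum>j\<in>UNIV. P$i$j))"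
    by (simp add: vm_nth sum_distrib_left) (rule sum.swap)
  then show ?thesis using assms by (simp add: stoch_rows)
qed

lemma dist_vm: assumes "distribution v" "stochastic P" shows "distribution (v v* P)"
proof -
  have "(\<Sum>j\<in>UNIV. (v v* P)$j) = 1" using sum_vm[OF assms(2), of v] assms(1) by (simp add: distribution_def)
  moreover have "(v v* P)$j \<ge> 0" for j using assms by (simp add: vm_nth distribution_def sum_nonneg stoch_nonneg)
  ultimately show ?thesis by (simp add: distribution_def)
qed

lemma n1_contract:
  assumes "stochastic Q" "\<And>i j. Q$i$j \<ge> c" "(\<Sum>i\<in>UNIV. u$i) = 0"
  shows "n1 (u v* Q) \<le> (1 - real CARD('n) * c) * n1 (u::real^'n)"
proof -
  have eq: "(u v* Q)$j = (\<Sum>i\<in>UNIV. u$i * (Q$i$j - c))" for j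
    using assms(3) by (simp add: vm_nth right_diff_distrib sum_subtractf sum_distrib_right[symmetric])
  have "n1 (u v* Q) \<le> (\<Sum>j\<in>UNIV. \<Sum>i\<in>UNIV. \<bar>u$i\<bar> * (Q$i$j - c))"
    unfolding n1_def eq
    by (rule sum_mono) (rule order_trans[OF sum_abs], simp add: abs_mult assms(2))
  also have "\<dots> = (\<Sum>i\<in>UNIV. \<bar>u$i\<bar> * (\<Sum>j\<in>UNIV. (Q$i$j - c)))"
    by (simp add: sum_distrib_left) (rule sum.swap)
  also have "\<dots> = (1 - real CARD('n) * c) * n1 u"
    using assms(1) by (simp add: sum_subtractf stoch_rows n1_def sum_distrib_left mult.commute)
  finally show ?thesis .
qed

lemma n1_contract0:
  assumes "stochastic Q" shows "n1 (u v* Q) \<le> n1 (u::real^'n)"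
proof -
  have "n1 (u v* Q) \<le> (\<Sum>j\<in>UNIV. \<Sum>i\<in>UNIV. \<bar>u$i\<bar> * Q$i$j)"
    unfolding n1_def vm_nth
    by (rule sum_mono) (rule order_trans[OF sum_abs], simp add: abs_mult assms stoch_nonneg)
  also have "\<dots> = (\<Sum>i\<in>UNIV. \<bar>u$i\<bar> * (\<Sum>j\<in>UNIV. Q$i$j))"
    by (simp add: sum_distrib_left) (rule sum.swap)
  also have "\<dots> = n1 u"
    using assms by (simp add: stoch_rows n1_def)
  finally show ?thesis .
qed

lemma sup_eq:
  assumes "stochastic P" "\<And>j. w$j \<le> (w v* P)$j"
  shows "w v* P = w"
proof -
  have "(\<Sum>j\<in>UNIV. (w v* P)$j - w$j) = 0" using sum_vm[OF assms(1)] by (simp add: sum_subtractf)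
  then have "\<forall>j\<in>UNIV. (w v* P)$j - w$j = 0"
    by (subst sum_nonneg_eq_0_iff[symmetric]) (auto simp: assms(2))
  then show ?thesis by (simp add: vec_eq_iff)
qed

lemma exists_stationary:
  assumes "stochastic (P::real^'n^'n)" shows "\<exists>\<pi>. stationary P \<pi>"
proof -
  define A where "A = P - mat 1"
  define o1 :: "real^'n" where "o1 = (\<chi> i. 1)"
  have "P *v o1 = o1" using assms
    by (simp add: o1_def matrix_vector_mult_def stoch_rows vec_eq_iff)
  then have "A *v o1 = 0" by (simp add: A_def matrix_vector_mult_diff_rdistrib)
  moreover have "o1 \<noteq> 0" by (simp add: o1_def vec_eq_iff)
  ultimately have "\<not> (\<exists>B. B ** A = mat 1)" using matrix_left_invertible_ker by blast
  then have "\<not> (\<exists>B. A ** B = mat 1)" using matrix_left_right_inverse by blast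
  then have "\<not> (\<exists>C. C ** transpose A = mat 1)"
    by (metis matrix_transpose_mul transpose_mat transpose_transpose)
  then obtain x where x: "x \<noteq> 0" "transpose A *v x = 0"
    using matrix_left_invertible_ker by blast
  then have "x v* A = 0" by simp
  then have xP: "x v* P = x" by (simp add: A_def vector_matrix_mult_diff_rdistrib)
  define w where "w = (\<chi> i. \<bar>x$i\<bar>)"
  have "w$j \<le> (w v* P)$j" for j
  proof -
    have "w$j = \<bar>(x v* P)$j\<bar>" using xP by (simp add: w_def)
    also have "\<dots> \<le> (\<Sum>i\<in>UNIV. \<bar>x$i * P$i$j\<bar>)" unfolding vm_nth by (rule sum_abs)
    also have "\<dots> = (w v* P)$j" using assms by (simp add: vm_nth w_def abs_mult stoch_nonneg)
    finally show ?thesis .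
  qed
  then have wP: "w v* P = w" by (rule sup_eq[OF assms])
  obtain i where "x$i \<noteq> 0" using x(1) by (auto simp: vec_eq_iff)
  then have "w$i > 0" by (simp add: w_def)
  then have S: "(\<Sum>i\<in>UNIV. w$i) > 0"
    by (intro sum_pos2[of UNIV i]) (auto simp: w_def)
  define \<pi> where "\<pi> = (1 / (\<Sum>i\<in>UNIV. w$i)) *s w"
  have "distribution \<pi>" using S
    by (simp add: distribution_def \<pi>_def w_def sum_divide_distrib[symmetric])
  moreover have "\<pi> v* P = \<pi>" by (simp add: \<pi>_def scalar_vector_matrix_assoc wP)
  ultimately show ?thesis unfolding stationary_def by blast
qed

lemma vm_matpow_fix: "w v* P = w \<Longrightarrow> w v* matpow P k = w"
  by (induct k) (simp_all add: vector_matrix_mul_assoc[symmetric])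

lemma mm_ge: assumes "\<And>i j. A$i$j \<ge> 0" "\<And>i j. B$i$j \<ge> (0::real)"
  shows "(A**B)$i$j \<ge> A$i$k * B$k$j"
  unfolding mm_nth by (rule member_le_sum) (auto simp: assms)

lemma pos_spread:
  assumes "stochastic P" "irreducible P" "\<And>i. w$i \<ge> 0" "w v* P = w" "w$i > 0"
  shows "w$j > 0"
proof -
  obtain k where k: "matpow P k $i$j > 0" using assms(2) unfolding irreducible_def by blast
  have "w$j = (w v* matpow P k)$j" using vm_matpow_fix[OF assms(4)] by simp
  also have "\<dots> \<ge> w$i * matpow P k $i$j" unfolding vm_nth
    by (rule member_le_sum) (auto simp: assms(3) stoch_nonneg[OF stoch_matpow[OF assms(1)]])
  finally show ?thesis using k assms(5) by (smt (verit) mult_pos_pos)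
qed

lemma pospart_fix:
  assumes "stochastic P" "u v* P = u"
  shows "(\<chi> i. max (u$i) 0) v* P = (\<chi> i. max (u$i) 0)"
proof (rule sup_eq[OF assms(1)])
  fix j
  have "u$j = (\<Sum>i\<in>UNIV. u$i * P$i$j)" using assms(2) by (metis vm_nth)
  also have "\<dots> \<le> (\<Sum>i\<in>UNIV. max (u$i) 0 * P$i$j)"
    by (rule sum_mono) (simp add: mult_right_mono stoch_nonneg[OF assms(1)])
  finally have a: "u$j \<le> ((\<chi> i. max (u$i) 0) v* P)$j" by (simp add: vm_nth)
  have "0 \<le> ((\<chi> i. max (u$i) 0) v* P)$j"
    by (simp add: vm_nth sum_nonneg stoch_nonneg[OF assms(1)])
  with a show "(\<chi> i. max (u$i) 0)$j \<le> ((\<chi> i. max (u$i) 0) v* P)$j" by simp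
qed

lemma unique_stationary:
  assumes "stochastic P" "irreducible P" "stationary P a" "stationary P b"
  shows "a = b"
proof (rule ccontr)
  assume ne: "a \<noteq> b"
  define u where "u = a - b"
  have uP: "u v* P = u" using assms(3,4) by (simp add: u_def stationary_def vector_matrix_mult_diff_distrib)
  have su: "(\<Sum>i\<in>UNIV. u$i) = 0" using assms(3,4)
    by (simp add: u_def stationary_def distribution_def sum_subtractf)
  obtain i0 where "u$i0 \<noteq> 0" using ne by (auto simp: u_def vec_eq_iff)
  have ex: "\<exists>i. u$i > 0" "\<exists>i. u$i < 0"
  proof -
    { assume "\<forall>i. u$i \<le> 0"
      then have "\<forall>i\<in>UNIV. -u$i = 0" using su
        by (subst sum_nonneg_eq_0_iff[symmetric]) (auto simp: sum_negf)
      then have False using \<open>u$i0 \<noteq> 0\<close> by simp }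
    then show "\<exists>i. u$i > 0" by (metis not_le)
    { assume "\<forall>i. u$i \<ge> 0"
      then have "\<forall>i\<in>UNIV. u$i = 0" using su
        by (subst sum_nonneg_eq_0_iff[symmetric]) auto
      then have False using \<open>u$i0 \<noteq> 0\<close> by simp }
    then show "\<exists>i. u$i < 0" by (metis not_le)
  qed
  then obtain i j where ij: "u$i > 0" "u$j < 0" by blast
  have "((\<chi> i. max (u$i) 0)::real^'a)$j > 0"
    by (rule pos_spread[OF assms(1,2) _ pospart_fix[OF assms(1) uP], of i]) (use ij in auto)
  then show False using ij by simp
qed

lemma stat_dist_stationary:
  assumes "stochastic P" "irreducible P" shows "stationary P (stat_dist P)"
proof -
  obtain \<pi> where "stationary P \<pi>" using exists_stationary[OF assms(1)] by blast
  then show ?thesis unfolding stat_dist_def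
    by (rule theI[of _ \<pi>]) (use unique_stationary[OF assms] \<open>stationary P \<pi>\<close> in blast)
qed

lemma interp_nth: "interp A B s $i$j = (1-s) * A$i$j + s * B$i$j"
  by (simp add: interp_def)

lemma interp_stoch: assumes "stochastic A" "stochastic B" "0 \<le> s" "s \<le> 1"
  shows "stochastic (interp A B s)"
  using assms by (auto simp: stochastic_def interp_nth sum.distrib sum_distrib_left[symmetric])

lemma interp0: "interp A B 0 = A" by (simp add: interp_def)

lemma matpow_nonneg: "(\<And>i j. M$i$j \<ge> (0::real)) \<Longrightarrow> matpow M k $i$j \<ge> 0"
  by (induct k arbitrary: i j) (auto simp: mat_def mm_nth sum_nonneg)

lemma matpow_lower:
  fixes A B :: "real^'n^'n"
  assumes "\<And>i j. A$i$j \<ge> 0" "\<And>i j. B$i$j \<ge> 0" "a \<ge> 0" "b \<ge> 0"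
  shows "matpow (\<chi> i j. a * A$i$j + b * B$i$j) k $i$j \<ge> a^k * matpow A k $i$j"
proof (induct k arbitrary: i j)
  case 0
  then show ?case by (simp add: mat_def)
next
  case (Suc k)
  have nA: "matpow A k $i$l \<ge> 0" for i l
    by (induct k arbitrary: i l) (auto simp: mat_def mm_nth assms sum_nonneg)
  have "a^(Suc k) * matpow A (Suc k) $i$j = (\<Sum>l\<in>UNIV. (a^k * matpow A k $i$l) * (a * A$l$j))"
    by (simp add: mm_nth sum_distrib_left mult_ac)
  also have "\<dots> \<le> (\<Sum>l\<in>UNIV. matpow (\<chi> i j. a * A$i$j + b * B$i$j) k $i$l * (a * A$l$j + b * B$l$j))"
    by (rule sum_mono, rule mult_mono) (auto simp: Suc assms nA add_increasing2 intro!: matpow_nonneg add_nonneg_nonneg)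
  also have "\<dots> = matpow (\<chi> i j. a * A$i$j + b * B$i$j) (Suc k) $i$j"
    by (simp add: mm_nth)
  finally show ?case .
qed

lemma interp_eq1: "interp A B s = (\<chi> i j. (1-s) * A$i$j + s * B$i$j)"
  by (simp add: vec_eq_iff interp_nth)
lemma interp_eq2: "interp A B s = (\<chi> i j. s * B$i$j + (1-s) * A$i$j)"
  by (simp add: vec_eq_iff interp_nth)

lemma interp_lower0:
  assumes "stochastic A" "stochastic B" "0 \<le> s" "s \<le> 1"
  shows "matpow (interp A B s) k $i$j \<ge> (1-s)^k * matpow A k $i$j"
  unfolding interp_eq1 by (rule matpow_lower) (use assms in \<open>auto simp: stoch_nonneg\<close>)
lemma interp_lower1:
  assumes "stochastic A" "stochastic B" "0 \<le> s" "s \<le> 1"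
  shows "matpow (interp A B s) k $i$j \<ge> s^k * matpow B k $i$j"
  unfolding interp_eq2 by (rule matpow_lower) (use assms in \<open>auto simp: stoch_nonneg\<close>)

lemma interp_irred:
  assumes "stochastic A" "stochastic B" "irreducible A" "irreducible B" "0 \<le> s" "s \<le> 1"
  shows "irreducible (interp A B s)"
  unfolding irreducible_def
proof (intro allI)
  fix i j
  show "\<exists>k. 0 < matpow (interp A B s) k $ i $ j"
  proof (cases "s = 0")
    case True
    then show ?thesis using assms(3) by (simp add: interp0 irreducible_def)
  next
    case False
    obtain k where k: "matpow B k $i$j > 0" using assms(4) irreducible_def by blast
    have "s^k * matpow B k $i$j > 0" using k False assms(5) by simp
    then have "0 < matpow (interp A B s) k $ i $ j" using interp_lower1[OF assms(1,2,5,6), of k i j] by linarith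
    then show ?thesis by blast
  qed
qed

lemma semigroup_mult_mem:
  assumes cl: "\<And>a b. a \<in> S \<Longrightarrow> b \<in> S \<Longrightarrow> a + b \<in> S" and x: "x \<in> S"
  shows "Suc k * x \<in> S"
  by (induct k) (auto simp: x cl)

lemma semigroup_large:
  fixes S :: "nat set"
  assumes cl: "\<And>a b. a \<in> S \<Longrightarrow> b \<in> S \<Longrightarrow> a + b \<in> S" and g: "Gcd S = 1"
  shows "\<exists>N. \<forall>n\<ge>N. n \<in> S"
proof -
  define S0 where "S0 = insert 0 S"
  have cl0: "a \<in> S0 \<Longrightarrow> b \<in> S0 \<Longrightarrow> a + b \<in> S0" for a b
    using cl by (auto simp: S0_def)
  have m0: "k * x \<in> S0" if "x \<in> S0" for k x
  proof (induct k)
    case 0 show ?case by (simp add: S0_def)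
  next
    case (Suc k) then show ?case using cl0[OF that Suc] by simp
  qed
  have "S \<noteq> {}" using g by auto
  then obtain s0 where s0: "s0 \<in> S" by blast
  define D where "D = {d. d > 0 \<and> (\<exists>a\<in>S0. \<exists>b\<in>S0. a = b + d)}"
  have "S \<noteq> {0}" using g by auto
  have "\<exists>s1\<in>S. s1 > 0"
  proof (rule ccontr)
    assume "\<not> (\<exists>s1\<in>S. s1 > 0)"
    then have "S \<subseteq> {0}" by auto
    then show False using \<open>S \<noteq> {}\<close> \<open>S \<noteq> {0}\<close> by (simp add: subset_singleton_iff)
  qed
  then obtain s1 where s1: "s1 \<in> S" "s1 > 0" by blast
  then have "s1 \<in> D" by (auto simp: D_def S0_def)
  define d0 where "d0 = (LEAST d. d \<in> D)"
  have d0D: "d0 \<in> D" unfolding d0_def by (rule LeastI) fact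
  then obtain a b where ab: "a \<in> S0" "b \<in> S0" "a = b + d0" "d0 > 0" by (auto simp: D_def)
  have dv: "d0 dvd s" if "s \<in> S" for s
  proof -
    define q r where "q = s div d0" and "r = s mod d0"
    have sqr: "s = q * d0 + r" by (simp add: q_def r_def)
    have r: "r < d0" using ab(4) by (simp add: r_def)
    have "s + q * b = q * a + r" using sqr ab(3) by (simp add: algebra_simps)
    moreover have "s + q * b \<in> S0" using that by (intro cl0 m0 ab) (auto simp: S0_def)
    moreover have "q * a \<in> S0" by (intro m0 ab)
    ultimately have "r > 0 \<Longrightarrow> r \<in> D" unfolding D_def by auto
    then have "r > 0 \<Longrightarrow> d0 \<le> r" unfolding d0_def by (simp add: Least_le)
    then have "r = 0" using r by linarith
    then show ?thesis by (simp add: r_def dvd_eq_mod_eq_0)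
  qed
  then have "d0 dvd Gcd S" by (simp add: Gcd_greatest)
  then have "d0 = 1" using g by simp
  then have ab1: "a = b + 1" using ab by simp
  show ?thesis
  proof (cases "b = 0")
    case True
    then have "1 \<in> S" using ab ab1 by (auto simp: S0_def)
    then have one: "Suc k * 1 \<in> S" for k using semigroup_mult_mem[of S, OF cl] by blast
    have "\<forall>n\<ge>1. n \<in> S"
    proof (intro allI impI)
      fix n :: nat assume "n \<ge> 1"
      then obtain k where "n = Suc k" by (cases n) auto
      then show "n \<in> S" using one[of k] by simp
    qed
    then show ?thesis by blast
  next
    case False
    then have bS: "b \<in> S" and aS: "b + 1 \<in> S" using ab ab1 by (auto simp: S0_def)
    have "n \<in> S" if "n \<ge> b * b" for n
    proof -
      define q r where "q = n div b" and "r = n mod b"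
      have nqr: "n = q * b + r" by (simp add: q_def r_def)
      have rb: "r < b" using False by (simp add: r_def)
      have qb: "q \<ge> b" using that False
        using div_le_mono[of "b*b" n b] False by (simp add: q_def)
      have "n = (q - r) * b + r * (b + 1)" using nqr rb qb
        by (simp add: algebra_simps diff_mult_distrib)
      moreover have "(q - r) * b \<in> S"
        using semigroup_mult_mem[of S, OF cl bS, of "q - r - 1"] rb qb by (simp add: Suc_diff_Suc)
      moreover have "r * (b + 1) \<in> S0" by (rule m0) (use aS in \<open>simp add: S0_def\<close>)
      ultimately show ?thesis using cl by (auto simp: S0_def)
    qed
    then show ?thesis by blast
  qed
qed

lemma primitive:
  fixes P :: "real^'n^'n"
  assumes "stochastic P" "irreducible P" "aperiodic P"
  shows "\<exists>K. \<forall>i j. matpow P K $i$j > 0"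
proof -
  have nn: "\<And>k i j. matpow P k $i$j \<ge> 0" using stoch_nonneg[OF stoch_matpow[OF assms(1)]] by blast
  have prod: "matpow P (a + b) $i$j \<ge> matpow P a $i$l * matpow P b $l$j" for a b i j l
    unfolding matpow_add by (rule mm_ge) (auto simp: nn)
  have diag: "\<exists>N. \<forall>t\<ge>N. matpow P t $i$i > 0" for i
  proof -
    define S where "S = {t. t \<ge> 1 \<and> matpow P t $i$i > 0}"
    have "Gcd S = 1" using assms(3) by (simp add: aperiodic_def period_def S_def)
    moreover have "a + b \<in> S" if "a \<in> S" "b \<in> S" for a b
    proof -
      have "matpow P a $i$i * matpow P b $i$i > 0" using that by (simp add: S_def)
      then have "matpow P (a+b) $i$i > 0" using prod[where a=a and b=b and i=i and j=i and l=i] by linarith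
      then show ?thesis using that by (simp add: S_def)
    qed
    ultimately obtain N where "\<forall>n\<ge>N. n \<in> S" using semigroup_large by blast
    then show ?thesis by (auto simp: S_def)
  qed
  have "\<exists>N. \<forall>t\<ge>N. matpow P t $fst p$snd p > 0" for p
  proof -
    obtain i j where p: "p = (i, j)" by (cases p)
    obtain k where k: "matpow P k $i$j > 0" using assms(2) irreducible_def by blast
    obtain N where N: "\<forall>t\<ge>N. matpow P t $i$i > 0" using diag by blast
    have "matpow P t $i$j > 0" if "t \<ge> N + k" for t
    proof -
      have "matpow P (t - k) $i$i * matpow P k $i$j > 0" using N k that by simp
      then show ?thesis using prod[where a="t-k" and b=k and i=i and j=j and l=i] that by simp
    qed
    then show ?thesis using p by auto
  qed
  then obtain F where F: "\<forall>p. \<forall>t\<ge>F p. matpow P t $fst p$snd p > 0" by metis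
  define K where "K = Max (range F)"
  have "F p \<le> K" for p unfolding K_def by (rule Max_ge) auto
  then show ?thesis using F by (metis fst_conv snd_conv)
qed

lemma primitive_c:
  fixes P :: "real^'n^'n"
  assumes "stochastic P" "irreducible P" "aperiodic P"
  shows "\<exists>K c. c > 0 \<and> (\<forall>i j. matpow P K $i$j \<ge> c)"
proof -
  obtain K where K: "\<forall>i j. matpow P K $i$j > 0" using primitive[OF assms] by blast
  define c where "c = Min (range (\<lambda>p. matpow P K $fst p$snd p))"
  have "c \<in> range (\<lambda>p. matpow P K $fst p$snd p)" unfolding c_def by (rule Min_in) auto
  then have "c > 0" using K by auto
  moreover have "matpow P K $i$j \<ge> c" for i j unfolding c_def
    by (rule Min_le) (auto intro: image_eqI[of _ _ "(i,j)"])
  ultimately show ?thesis by blast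
qed

lemma nc_le1:
  assumes "stochastic (Q::real^'n^'n)" "\<And>i j. Q$i$j \<ge> c"
  shows "real CARD('n) * c \<le> 1"
proof -
  obtain i :: 'n where True by blast
  have "real CARD('n) * c = (\<Sum>j\<in>(UNIV::'n set). c)" by simp
  also have "\<dots> \<le> (\<Sum>j\<in>UNIV. Q$i$j)" by (rule sum_mono) (simp add: assms(2))
  also have "\<dots> = 1" using assms(1) by (simp add: stoch_rows)
  finally show ?thesis .
qed

lemma doeblin:
  fixes P :: "real^'n^'n"
  assumes "stochastic P" "stationary P \<pi>" "\<And>i j. matpow P K $i$j \<ge> c"
    "(1 - real CARD('n) * c)^m * 2 \<le> \<eta>" "distribution \<nu>"
  shows "n1 (\<nu> v* matpow P (m*K) - \<pi>) \<le> \<eta>"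
proof -
  define Q where "Q = matpow P K"
  have Q: "stochastic Q" using stoch_matpow assms(1) Q_def by blast
  have c1: "real CARD('n) * c \<le> 1" using nc_le1[OF Q] assms(3) Q_def by blast
  have piP: "\<pi> v* P = \<pi>" using assms(2) by (simp add: stationary_def)
  have piQ: "\<pi> v* matpow Q m = \<pi>" by (rule vm_matpow_fix) (simp add: Q_def vm_matpow_fix[OF piP])
  define u where "u = \<nu> - \<pi>"
  have gen: "n1 (w v* matpow Q k) \<le> (1 - real CARD('n) * c)^k * n1 w"
    if "(\<Sum>i\<in>UNIV. w$i) = 0" for k w
  proof (induct k)
    case 0 show ?case by simp
  next
    case (Suc k)
    have s: "(\<Sum>i\<in>UNIV. (w v* matpow Q k)$i) = 0" using sum_vm[OF stoch_matpow[OF Q]] that by simp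
    have "n1 (w v* matpow Q (Suc k)) = n1 ((w v* matpow Q k) v* Q)" by (simp add: vector_matrix_mul_assoc)
    also have "\<dots> \<le> (1 - real CARD('n) * c) * n1 (w v* matpow Q k)"
      by (rule n1_contract[OF Q _ s]) (simp add: Q_def assms(3))
    also have "\<dots> \<le> (1 - real CARD('n) * c) * ((1 - real CARD('n) * c)^k * n1 w)"
      by (rule mult_left_mono[OF Suc]) (use c1 in simp)
    finally show ?case by (simp add: mult_ac)
  qed
  have su: "(\<Sum>i\<in>UNIV. u$i) = 0" using assms(2,5)
    by (simp add: u_def stationary_def distribution_def sum_subtractf)
  have "\<nu> v* matpow P (m*K) - \<pi> = u v* matpow Q m"
    by (simp add: u_def Q_def matpow_mult vector_matrix_mult_diff_distrib piQ[unfolded Q_def])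
  then have "n1 (\<nu> v* matpow P (m*K) - \<pi>) \<le> (1 - real CARD('n) * c)^m * n1 u" using gen[OF su] by simp
  also have "\<dots> \<le> (1 - real CARD('n) * c)^m * 2"
  proof (rule mult_left_mono)
    show "n1 u \<le> 2" using n1_diff[of \<nu> \<pi>] assms(2,5) by (simp add: u_def n1_dist stationary_def)
  qed (use c1 in simp)
  finally show ?thesis using assms(4) by linarith
qed

lemma choose_m: "(x::real) < 1 \<Longrightarrow> \<eta> > 0 \<Longrightarrow> \<exists>m. x^m * 2 \<le> \<eta>"
proof -
  assume "x < 1" "\<eta> > 0"
  then obtain n where "x^n < \<eta>/2" using real_arch_pow_inv[of "\<eta>/2" x] by auto
  then have "x^n * 2 \<le> \<eta>" by linarith
  then show ?thesis by blast
qed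

lemma tmix_bound:
  fixes P :: "real^'n^'n"
  assumes "stochastic P" "irreducible P" "\<And>i j. matpow P K $i$j \<ge> c"
    "(1 - real CARD('n) * c)^m * 2 \<le> \<eta>"
  shows "tmix P (\<eta>/2) \<le> m*K"
    "\<forall>\<nu>. distribution \<nu> \<longrightarrow> tv_dist (\<nu> v* matpow P (tmix P (\<eta>/2))) (stat_dist P) \<le> \<eta>/2"
proof -
  define S where "S = {T. \<forall>\<nu>. distribution \<nu> \<longrightarrow> tv_dist (\<nu> v* matpow P T) (stat_dist P) \<le> \<eta>/2}"
  have "m*K \<in> S" unfolding S_def tv_n1
    using doeblin[OF assms(1) stat_dist_stationary[OF assms(1,2)] assms(3,4)] by simp
  then have "Inf S \<le> m*K" by (simp add: Inf_nat_def Least_le)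
  moreover have "Inf S \<in> S" by (rule Inf_nat_def1) (use \<open>m*K \<in> S\<close> in auto)
  ultimately show "tmix P (\<eta>/2) \<le> m*K"
    "\<forall>\<nu>. distribution \<nu> \<longrightarrow> tv_dist (\<nu> v* matpow P (tmix P (\<eta>/2))) (stat_dist P) \<le> \<eta>/2"
    by (simp_all add: tmix_def S_def)
qed

lemma mixes:
  fixes P :: "real^'n^'n"
  assumes "stochastic P" "irreducible P" "aperiodic P" "\<eta> > 0"
  shows "\<forall>\<nu>. distribution \<nu> \<longrightarrow> tv_dist (\<nu> v* matpow P (tmix P (\<eta>/2))) (stat_dist P) \<le> \<eta>/2"
proof -
  obtain K c where Kc: "c > 0" "\<And>i j. matpow P K $i$j \<ge> c" using primitive_c[OF assms(1-3)] by blast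
  have "real CARD('n) * c > 0" using Kc by simp
  then obtain m where "(1 - real CARD('n) * c)^m * 2 \<le> \<eta>" using choose_m[OF _ assms(4)] by force
  then show ?thesis using tmix_bound(2)[OF assms(1,2) Kc(2)] by blast
qed

lemma uniform_tmix:
  fixes P0 P1 :: "real^'n^'n"
  assumes "stochastic P0" "irreducible P0" "aperiodic P0"
      and "stochastic P1" "irreducible P1" "aperiodic P1" "\<eta> > 0"
  shows "\<exists>N. \<forall>s\<in>{0..1}. tmix (interp P0 P1 s) (\<eta>/2) \<le> N"
proof -
  obtain K0 c0 where K0: "c0 > 0" "\<And>i j. matpow P0 K0 $i$j \<ge> c0" using primitive_c[OF assms(1-3)] by blast
  obtain K1 c1 where K1: "c1 > 0" "\<And>i j. matpow P1 K1 $i$j \<ge> c1" using primitive_c[OF assms(4-6)] by blast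
  define d0 where "d0 = (1/2)^K0 * c0"
  define d1 where "d1 = (1/2)^K1 * c1"
  have "d0 \<le> c0" using K0 unfolding d0_def by (simp add: mult_left_le_one_le power_le_one)
  then have "real CARD('n) * d0 > 0" using K0 by (simp add: d0_def)
  then obtain m0 where m0: "(1 - real CARD('n) * d0)^m0 * 2 \<le> \<eta>" using choose_m[OF _ assms(7)] by force
  have "real CARD('n) * d1 > 0" using K1 by (simp add: d1_def)
  then obtain m1 where m1: "(1 - real CARD('n) * d1)^m1 * 2 \<le> \<eta>" using choose_m[OF _ assms(7)] by force
  have "tmix (interp P0 P1 s) (\<eta>/2) \<le> max (m0*K0) (m1*K1)" if s: "s \<in> {0..1}" for s
  proof -
    have st: "stochastic (interp P0 P1 s)" using interp_stoch assms s by auto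
    have ir: "irreducible (interp P0 P1 s)" using interp_irred assms s by auto
    show ?thesis
    proof (cases "s \<le> 1/2")
      case True
      have "matpow (interp P0 P1 s) K0 $i$j \<ge> d0" for i j
      proof -
        have "(1/2::real)^K0 \<le> (1-s)^K0" by (rule power_mono) (use True in auto)
        then have "d0 \<le> (1-s)^K0 * matpow P0 K0 $i$j"
          unfolding d0_def by (rule mult_mono) (use K0 s in auto)
        then show ?thesis using interp_lower0[OF assms(1,4), of s K0 i j] s by auto
      qed
      then show ?thesis using tmix_bound(1)[OF st ir _ m0] by fastforce
    next
      case False
      have "matpow (interp P0 P1 s) K1 $i$j \<ge> d1" for i j
      proof -
        have "(1/2::real)^K1 \<le> s^K1" by (rule power_mono) (use False in auto)
        then have "d1 \<le> s^K1 * matpow P1 K1 $i$j"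
          unfolding d1_def by (rule mult_mono) (use K1 s in auto)
        then show ?thesis using interp_lower1[OF assms(1,4), of s K1 i j] s by auto
      qed
      then show ?thesis using tmix_bound(1)[OF st ir _ m1] by fastforce
    qed
  qed
  then show ?thesis by blast
qed

lemma sum_vm_left: "(\<Sum>j\<in>A. f j) v* M = (\<Sum>j\<in>A. f j v* (M::real^'n^'m))"
  by (induct A rule: infinite_finite_induct) (auto simp: vector_matrix_left_distrib vec_eq_iff vm_nth)

lemma scaleR_vm: "(r *\<^sub>R x) v* M = r *\<^sub>R (x v* (M::real^'n^'m))"
  using scalar_vector_matrix_assoc[of r x M] by (simp add: scalar_mult_eq_scaleR)

lemma mix_contract:
  fixes M :: "real^'n^'n"
  assumes mix: "\<And>\<nu>. distribution \<nu> \<Longrightarrow> n1 (\<nu> v* M - \<pi>0) \<le> \<eta>"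
    and "distribution \<mu>" "distribution \<nu>"
  shows "n1 ((\<mu> - \<nu>) v* M) \<le> \<eta> * n1 (\<mu> - \<nu>)"
proof -
  define u where "u = \<mu> - \<nu>"
  define p :: "real^'n" where "p = (\<chi> i. max (u$i) 0)"
  define q :: "real^'n" where "q = (\<chi> i. max (- u$i) 0)"
  have upq: "u = p - q" by (simp add: vec_eq_iff p_def q_def max_def)
  have su: "(\<Sum>i\<in>UNIV. u$i) = 0" using assms(2,3) by (simp add: u_def distribution_def sum_subtractf)
  define c where "c = (\<Sum>i\<in>UNIV. p$i)"
  have cq: "(\<Sum>i\<in>UNIV. q$i) = c" using su unfolding upq c_def by (simp add: sum_subtractf)
  have n1u: "n1 u = 2 * c"
  proof -
    have "n1 u = (\<Sum>i\<in>UNIV. p$i + q$i)" unfolding n1_def by (rule sum.cong) (auto simp: p_def q_def)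
    then show ?thesis using cq by (simp add: sum.distrib c_def)
  qed
  have pn: "p$i \<ge> 0" "q$i \<ge> 0" for i by (auto simp: p_def q_def)
  show ?thesis
  proof (cases "c = 0")
    case True
    then have "\<forall>i\<in>UNIV. p$i = 0" "\<forall>i\<in>UNIV. q$i = 0" using cq
      by (subst sum_nonneg_eq_0_iff[symmetric]; simp add: pn c_def)+
    then have "u = 0" using upq by (simp add: vec_eq_iff)
    then show ?thesis by (simp add: u_def[symmetric] n1_def vm_nth)
  next
    case False
    then have cpos: "c > 0" using pn unfolding c_def by (simp add: sum_nonneg order_le_neq_trans)
    define a where "a = (1/c) *\<^sub>R p"
    define b where "b = (1/c) *\<^sub>R q"
    have da: "distribution a" using cpos pn
      by (simp add: distribution_def a_def c_def sum_divide_distrib[symmetric])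
    have db: "distribution b" using cpos pn cq
      by (simp add: distribution_def b_def sum_divide_distrib[symmetric])
    have pa: "p = c *\<^sub>R a" "q = c *\<^sub>R b" using cpos by (simp_all add: a_def b_def)
    have "u v* M = c *\<^sub>R ((a v* M - \<pi>0) - (b v* M - \<pi>0))"
      unfolding upq pa by (simp add: vector_matrix_mult_diff_distrib scaleR_vm algebra_simps)
    then have "n1 (u v* M) = c * n1 ((a v* M - \<pi>0) - (b v* M - \<pi>0))" using cpos by (simp add: n1_scaleR)
    also have "\<dots> \<le> c * (\<eta> + \<eta>)"
      using n1_diff[of "a v* M - \<pi>0" "b v* M - \<pi>0"] mix[OF da] mix[OF db] cpos
      by (intro mult_left_mono) auto
    finally show ?thesis using n1u by (simp add: u_def[symmetric] algebra_simps)
  qed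
qed

lemma perturb:
  fixes P0 P1 :: "real^'n^'n"
  assumes "stochastic P0" "stochastic P1" "stationary (interp P0 P1 s) \<pi>" "stationary P0 \<pi>0"
    "0 \<le> s" "\<eta> < 1"
    "\<forall>\<nu>. distribution \<nu> \<longrightarrow> tv_dist (\<nu> v* matpow P0 T) \<pi>0 \<le> \<eta>/2"
  shows "tv_dist \<pi> \<pi>0 \<le> s * real T / (1 - \<eta>)"
proof -
  define d where "d = \<pi> v* P1 - \<pi> v* P0"
  have piP: "\<pi> v* interp P0 P1 s = \<pi>" using assms(3) by (simp add: stationary_def)
  have "\<pi> v* interp P0 P1 s = \<pi> v* P0 + s *\<^sub>R d"
    by (simp add: vec_eq_iff vm_nth interp_nth d_def algebra_simps sum.distrib sum_distrib_left sum_subtractf)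
  then have pP0: "\<pi> v* P0 = \<pi> - s *\<^sub>R d" using piP by (simp add: algebra_simps)
  have pow: "\<pi> v* matpow P0 k = \<pi> - s *\<^sub>R (\<Sum>j<k. d v* matpow P0 j)" for k
  proof (induct k)
    case 0 then show ?case by simp
  next
    case (Suc k)
    have "\<pi> v* matpow P0 (Suc k) = (\<pi> v* matpow P0 k) v* P0" by (simp add: vector_matrix_mul_assoc)
    also have "\<dots> = \<pi> v* P0 - s *\<^sub>R (\<Sum>j<k. d v* matpow P0 (Suc j))"
      using Suc by (simp add: vector_matrix_mult_diff_distrib scaleR_vm sum_vm_left vector_matrix_mul_assoc)
    also have "\<dots> = \<pi> - s *\<^sub>R (\<Sum>j<Suc k. d v* matpow P0 j)"
      unfolding pP0 sum.lessThan_Suc_shift by (simp add: algebra_simps)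
    finally show ?case .
  qed
  have p0fix: "\<pi>0 v* matpow P0 T = \<pi>0" using assms(4) by (simp add: stationary_def vm_matpow_fix)
  have eq: "\<pi> - \<pi>0 = (\<pi> - \<pi>0) v* matpow P0 T + s *\<^sub>R (\<Sum>j<T. d v* matpow P0 j)"
    by (simp add: vector_matrix_mult_diff_distrib pow p0fix)
  have dpi: "distribution \<pi>" "distribution \<pi>0" using assms(3,4) by (auto simp: stationary_def)
  have mix: "\<And>\<nu>. distribution \<nu> \<Longrightarrow> n1 (\<nu> v* matpow P0 T - \<pi>0) \<le> \<eta>"
    using assms(7) by (auto simp: tv_n1)
  have c1: "n1 ((\<pi> - \<pi>0) v* matpow P0 T) \<le> \<eta> * n1 (\<pi> - \<pi>0)"
    by (rule mix_contract[OF mix dpi])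
  have nd: "n1 d \<le> 2" using n1_diff[of "\<pi> v* P1" "\<pi> v* P0"] dist_vm[OF dpi(1)] assms(1,2)
    by (simp add: d_def n1_dist)
  have "n1 (\<Sum>j<T. d v* matpow P0 j) \<le> (\<Sum>j<T. n1 (d v* matpow P0 j))" by (rule n1_sum)
  also have "\<dots> \<le> (\<Sum>j<T. 2)"
    by (rule sum_mono) (use n1_contract0[OF stoch_matpow[OF assms(1)]] nd in \<open>meson order_trans\<close>)
  finally have c2: "n1 (\<Sum>j<T. d v* matpow P0 j) \<le> 2 * real T" by simp
  have "n1 (\<pi> - \<pi>0) \<le> n1 ((\<pi> - \<pi>0) v* matpow P0 T) + n1 (s *\<^sub>R (\<Sum>j<T. d v* matpow P0 j))"
    using n1_add eq by metis
  also have "\<dots> \<le> \<eta> * n1 (\<pi> - \<pi>0) + s * (2 * real T)"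
    using c1 c2 assms(5) by (simp add: n1_scaleR mult_left_mono add_mono)
  finally have "(1 - \<eta>) * n1 (\<pi> - \<pi>0) \<le> 2 * (s * real T)" by (simp add: algebra_simps)
  then have "n1 (\<pi> - \<pi>0) \<le> 2 * (s * real T) / (1 - \<eta>)" using assms(6)
    by (simp add: pos_le_divide_eq mult.commute)
  then show ?thesis by (simp add: tv_n1 mult_ac)
qed

theorem corollary1:
  fixes P0 P1 :: "real^'n^'n"
  assumes "stochastic P0" "irreducible P0" "aperiodic P0"
      and "stochastic P1" "irreducible P1" "aperiodic P1"
  shows "((\<lambda>s. tv_dist (stat_dist (interp P0 P1 s)) (stat_dist P0)) \<longlongrightarrow> 0) (at 0 within {0..1})
    \<and> (\<forall>\<epsilon>. 0 < \<epsilon> \<and> \<epsilon> < 1 / sqrt (real CARD('n)) \<longrightarrow>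
         (let \<delta> = \<epsilon> * (1 - sqrt (real CARD('n)) * \<epsilon>)
                  / (4 * real CARD('n) powr (3/2) * real (tmix_path P0 P1 (\<epsilon>/2)))
          in \<forall>s\<in>{0..1}. s \<le> \<delta> \<longrightarrow>
               tv_dist (stat_dist (interp P0 P1 s)) (stat_dist P0) \<le> \<epsilon> / 2))"
proof -
  define \<pi>0 where "\<pi>0 = stat_dist P0"
  define f where "f = (\<lambda>s. tv_dist (stat_dist (interp P0 P1 s)) \<pi>0)"
  have st0: "stationary P0 \<pi>0" unfolding \<pi>0_def by (rule stat_dist_stationary[OF assms(1,2)])
  have sts: "stationary (interp P0 P1 s) (stat_dist (interp P0 P1 s))" if "s \<in> {0..1}" for s
    using that by (intro stat_dist_stationary interp_stoch interp_irred assms) auto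
  have bound: "f s \<le> s * real (tmix P0 (\<eta>/2)) / (1 - \<eta>)"
    if "0 < \<eta>" "\<eta> < 1" "s \<in> {0..1}" for s \<eta>
    unfolding f_def
    by (rule perturb[OF assms(1,4) sts[OF that(3)] st0])
       (use that mixes[OF assms(1-3) that(1)] in \<open>auto simp: \<pi>0_def\<close>)
  have fnn: "f s \<ge> 0" for s by (simp add: f_def tv_n1 n1_nonneg)
  have part1: "(f \<longlongrightarrow> 0) (at 0 within {0..1})"
  proof (rule tendsto_sandwich[of "\<lambda>s. 0" _ _ "\<lambda>s. s * real (tmix P0 ((1/2)/2)) / (1 - 1/2)"])
    show "\<forall>\<^sub>F s in at 0 within {0..1}. 0 \<le> f s" by (simp add: fnn)
    show "\<forall>\<^sub>F s in at 0 within {0..1}. f s \<le> s * real (tmix P0 ((1/2)/2)) / (1 - 1/2)"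
      unfolding eventually_at_filter by (intro always_eventually allI impI bound) auto
    show "((\<lambda>s. 0) \<longlongrightarrow> (0::real)) (at 0 within {0..1})" by simp
    have "((\<lambda>s. s * real (tmix P0 ((1/2)/2)) / (1 - 1/2)) \<longlongrightarrow> 0 * real (tmix P0 ((1/2)/2)) / (1 - 1/2)) (at 0 within {0..1})"
      by (intro tendsto_intros) simp
    then show "((\<lambda>s. s * real (tmix P0 ((1/2)/2)) / (1 - 1/2)) \<longlongrightarrow> 0) (at 0 within {0..1})" by simp
  qed
  have part2: "(let \<delta> = \<epsilon> * (1 - sqrt (real CARD('n)) * \<epsilon>)
                  / (4 * real CARD('n) powr (3/2) * real (tmix_path P0 P1 (\<epsilon>/2)))
          in \<forall>s\<in>{0..1}. s \<le> \<delta> \<longrightarrow> f s \<le> \<epsilon> / 2)"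
    if e: "0 < \<epsilon>" "\<epsilon> < 1 / sqrt (real CARD('n))" for \<epsilon>
  proof -
    define n where "n = real CARD('n)"
    have n1: "n \<ge> 1" by (simp add: n_def)
    have sn: "sqrt n \<ge> 1" using n1 by simp
    have e1: "sqrt n * \<epsilon> < 1" using e sn by (simp add: field_simps n_def)
    have "\<epsilon> \<le> sqrt n * \<epsilon>" using sn e(1) by simp
    then have elt: "\<epsilon> < 1" using e1 by linarith
    define g where "g = (\<lambda>s. tmix (interp P0 P1 s) (\<epsilon>/2))"
    define T0 where "T0 = tmix P0 (\<epsilon>/2)"
    define T' where "T' = tmix_path P0 P1 (\<epsilon>/2)"
    obtain N where N: "\<forall>s\<in>{0..1}. g s \<le> N" using uniform_tmix[OF assms e(1)] unfolding g_def by blast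
    have fin: "finite (g ` {0..1})" by (rule finite_subset[of _ "{..N}"]) (use N in auto)
    have "g 0 = T0" by (simp add: g_def T0_def interp0)
    then have T0in: "T0 \<in> g ` {0..1}" by (metis atLeastAtMost_iff image_eqI order_refl zero_le_one)
    have "T' = Sup (g ` {0..1})" by (simp add: T'_def tmix_path_def g_def)
    then have T0T: "T0 \<le> T'" using cSup_upper[OF T0in bdd_above_finite[OF fin]] by simp
    define \<delta> where "\<delta> = \<epsilon> * (1 - sqrt n * \<epsilon>) / (4 * n powr (3/2) * real T')"
    have np: "n powr (3/2) \<ge> 1" using n1 by (rule ge_one_powr_ge_zero) simp
    have "\<forall>s\<in>{0..1}. s \<le> \<delta> \<longrightarrow> f s \<le> \<epsilon> / 2"
    proof (intro ballI impI)
      fix s :: real assume s: "s \<in> {0..1}" "s \<le> \<delta>"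
      show "f s \<le> \<epsilon>/2"
      proof (cases "T' = 0")
        case True
        then have "s = 0" using s by (simp add: \<delta>_def)
        then show ?thesis using e by (simp add: f_def interp0 \<pi>0_def tv_n1 n1_def)
      next
        case False
        have fs: "f s \<le> s * real T0 / (1 - \<epsilon>)" unfolding T0_def by (rule bound) (use e elt s in auto)
        have dpos: "\<delta> \<ge> 0" unfolding \<delta>_def using e1 e(1) np
          by (intro divide_nonneg_nonneg mult_nonneg_nonneg) auto
        have "s * real T0 \<le> \<delta> * real T'"
          by (rule mult_mono) (use s T0T dpos in auto)
        also have "\<delta> * real T' = \<epsilon> * (1 - sqrt n * \<epsilon>) / (4 * n powr (3/2))"
          using False by (simp add: \<delta>_def)
        also have "\<dots> \<le> \<epsilon> * (1 - \<epsilon>) / 4"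
        proof (rule frac_le)
          show "0 \<le> \<epsilon> * (1 - \<epsilon>)" using e elt by simp
          show "\<epsilon> * (1 - sqrt n * \<epsilon>) \<le> \<epsilon> * (1 - \<epsilon>)"
            using e \<open>\<epsilon> \<le> sqrt n * \<epsilon>\<close> by (intro mult_left_mono) auto
        qed (use np in auto)
        finally have "s * real T0 / (1 - \<epsilon>) \<le> \<epsilon> * (1 - \<epsilon>) / 4 / (1 - \<epsilon>)"
          using elt by (intro divide_right_mono) auto
        also have "\<dots> = \<epsilon> / 4" using elt by (simp add: field_simps)
        finally show ?thesis using fs e by linarith
      qed
    qed
    then show ?thesis unfolding Let_def \<delta>_def n_def T'_def .
  qed
  show ?thesis using part1 part2 unfolding f_def \<pi>0_def by blast
qed

end
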